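(* Let $\omega=t_1\pi_1+\dots+t_m\pi_m$ be a formal real linear combination of $k$-permutations. If $\sum_{i\in[m]}t_iP_{\pi_i}=0$, then the cover matrix $\mathrm{Cov}(\omega)$ is constant (all its entries are equal).
   Context: A $k$-permutation is a bijection of $[k]=\{1,\dots,k\}$. The gradient polynomial of a $k$-permutation $\pi$ is $P_\pi(\alpha,\beta)=k!\sum_{m\in[k]}\left(\frac{k-m}{1-\alpha}-\frac{m-1}{\alpha}\right)\left(\frac{k-\pi(m)}{1-\beta}-\frac{\pi(m)-1}{\beta}\right)\frac{\alpha^{m-1}(1-\alpha)^{k-m}\beta^{\pi(m)-1}(1-\beta)^{k-\pi(m)}}{(m-1)!(k-m)!(\pi(m)-1)!(k-\pi(m))!}$. The permutation matrix $A_\pi\in\mathbb{R}^{k\times k}$ has $(A_\pi)_{i,j}=1$ if $\pi(i)=j$ and $0$ otherwise, and the cover matrix of $\omega=\sum_i t_i\pi_i$ is $\mathrm{Cov}(\omega)=\sum_i t_iA_{\pi_i}$. *)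

theory Defs
  imports Complex_Main "HOL-Combinatorics.Permutations"
begin

definition kperm :: "nat \<Rightarrow> (nat \<Rightarrow> nat) \<Rightarrow> bool" where
  "kperm k p \<longleftrightarrow> p permutes {1..k}"

text \<open>Gradient polynomial of a k-permutation, as written in the paper
  (as a real function of alpha, beta; meaningful for 0 < alpha, beta < 1).\<close>

definition grad_poly :: "nat \<Rightarrow> (nat \<Rightarrow> nat) \<Rightarrow> real \<Rightarrow> real \<Rightarrow> real" where
  "grad_poly k p \<alpha> \<beta> = fact k * (\<Sum>m\<in>{1..k}.
      (real (k - m) / (1 - \<alpha>) - real (m - 1) / \<alpha>) *
      (real (k - p m) / (1 - \<beta>) - real (p m - 1) / \<beta>) *
      (\<alpha> ^ (m - 1) * (1 - \<alpha>) ^ (k - m) * \<beta> ^ (p m - 1) * (1 - \<beta>) ^ (k - p m)) /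
      (fact (m - 1) * fact (k - m) * fact (p m - 1) * fact (k - p m)))"

definition perm_matrix :: "(nat \<Rightarrow> nat) \<Rightarrow> nat \<Rightarrow> nat \<Rightarrow> real" where
  "perm_matrix p i j = (if p i = j then 1 else 0)"

definition cover_matrix :: "nat \<Rightarrow> (nat \<Rightarrow> real) \<Rightarrow> (nat \<Rightarrow> nat \<Rightarrow> nat) \<Rightarrow> nat \<Rightarrow> nat \<Rightarrow> real" where
  "cover_matrix n t \<pi> i j = (\<Sum>l\<in>{1..n}. t l * perm_matrix (\<pi> l) i j)"

end

theory Submission
  imports Defs
begin

lemma poly0:
  fixes c :: "nat \<Rightarrow> real"
  assumes "\<forall>x>0. (\<Sum>i\<le>n. c i * x^i) = 0"
  shows "\<forall>i\<le>n. c i = 0"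
proof (rule ccontr)
  assume "\<not> (\<forall>i\<le>n. c i = 0)"
  then obtain j where "j \<le> n" "c j \<noteq> 0" by auto
  then have "finite {z. (\<Sum>i\<le>n. c i * z^i) = 0}" using polyfun_roots_finite by blast
  moreover have "{0<..} \<subseteq> {z. (\<Sum>i\<le>n. c i * z^i) = 0}" using assms by auto
  ultimately have "finite {0::real<..}" using finite_subset by blast
  then show False using infinite_Ioi by blast
qed

lemma cancel_aux: "(d::real) \<noteq> 0 \<Longrightarrow> a / (F1*F2) * X = a * d * X / (F1 * (d*F2))"
  by (simp add: field_simps)

definition aa :: "nat \<Rightarrow> nat \<Rightarrow> real \<Rightarrow> real" where
  "aa k m x = (real (k-m) * x - real (m-1)) * x^(m-1) / (fact (m-1) * fact (k-m))"

lemma fact_reduce_r: "r < k \<Longrightarrow> fact (k-r) = (real (k-r) * fact (k-r-1) :: real)"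
  by (rule fact_reduce) simp
lemma fact_reduce_n: "r \<noteq> 0 \<Longrightarrow> fact r = (real r * fact (r-1) :: real)"
  by (rule fact_reduce) simp

lemma aux1: "((a::real)*x - b)*y / F = a * (x*y)/F - b*y/F"
  by (simp add: diff_divide_distrib left_diff_distrib mult.assoc)

lemma aa_split: "i \<in> {1..k} \<Longrightarrow> v i * aa k i x = v i * real (k-i) * x^i / (fact (i-1) * fact (k-i)) - v i * real (i-1) * x^(i-1) / (fact (i-1) * fact (k-i))"
proof -
  assume "i \<in> {1..k}"
  then have e: "x * x^(i-1) = x^i" by (cases i) auto
  show ?thesis unfolding aa_def aux1 e by (simp add: right_diff_distrib mult_ac)
qed
lemma expand:
  fixes v :: "nat \<Rightarrow> real"
  shows "(\<Sum>i\<in>{1..k}. v i * aa k i x) = (\<Sum>r\<le>k. (if 1 \<le> r \<and> r < k then (v r - v (Suc r)) / (fact (r-1) * fact (k-r-1)) else 0) * x^r)"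
proof -
  have e1: "(\<Sum>i\<in>{1..k}. v i * aa k i x) = (\<Sum>i\<in>{1..k}. v i * real (k-i) * x^i / (fact (i-1) * fact (k-i)))
     - (\<Sum>i\<in>{1..k}. v i * real (i-1) * x^(i-1) / (fact (i-1) * fact (k-i)))"
    unfolding sum_subtractf[symmetric] by (rule sum.cong) (simp_all add: aa_split)
  have e2: "(\<Sum>i\<in>{1..k}. v i * real (k-i) * x^i / (fact (i-1) * fact (k-i)))
     = (\<Sum>r\<le>k. (if 1 \<le> r \<and> r < k then v r / (fact (r-1) * fact (k-r-1)) else 0) * x^r)"
  proof -
    have "(\<Sum>r\<le>k. (if 1 \<le> r \<and> r < k then v r / (fact (r-1) * fact (k-r-1)) else 0) * x^r)
        = (\<Sum>r\<in>{1..k}. (if 1 \<le> r \<and> r < k then v r / (fact (r-1) * fact (k-r-1)) else 0) * x^r)"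
      by (rule sum.mono_neutral_right) auto
    also have "\<dots> = (\<Sum>i\<in>{1..k}. v i * real (k-i) * x^i / (fact (i-1) * fact (k-i)))"
    proof (rule sum.cong)
      fix r assume r: "r \<in> {1..k}"
      show "(if 1 \<le> r \<and> r < k then v r / (fact (r-1) * fact (k-r-1)) else 0) * x^r = v r * real (k-r) * x^r / (fact (r-1) * fact (k-r))"
      proof (cases "r < k")
        case True
        have "fact (k-r) = (real (k-r) * fact (k-r-1) :: real)"
          using True by (rule fact_reduce_r)
        moreover have "real (k-r) \<noteq> 0" using True by simp
        ultimately show ?thesis using True r
          using cancel_aux[of "real (k-r)" "v r" "fact (r-1)" "fact (k-r-1)" "x^r"] by simp
      qed (use r in auto)
    qed simp
    finally show ?thesis by simp
  qed
  have e3: "(\<Sum>i\<in>{1..k}. v i * real (i-1) * x^(i-1) / (fact (i-1) * fact (k-i)))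
     = (\<Sum>r\<le>k. (if 1 \<le> r \<and> r < k then v (Suc r) / (fact (r-1) * fact (k-r-1)) else 0) * x^r)"
  proof (cases k)
    case 0 then show ?thesis by simp
  next
    case (Suc K)
    have "(\<Sum>i\<in>{1..k}. v i * real (i-1) * x^(i-1) / (fact (i-1) * fact (k-i)))
       = (\<Sum>r\<in>{0..K}. v (Suc r) * real r * x^r / (fact r * fact (K-r)))"
      unfolding Suc using sum.shift_bounds_cl_Suc_ivl[of "\<lambda>i. v i * real (i-1) * x^(i-1) / (fact (i-1) * fact (Suc K-i))" 0 K]
      by simp
    also have "\<dots> = (\<Sum>r\<in>{0..k}. (if 1 \<le> r \<and> r < k then v (Suc r) / (fact (r-1) * fact (k-r-1)) else 0) * x^r)"
    proof -
      have "(\<Sum>r\<in>{0..k}. (if 1 \<le> r \<and> r < k then v (Suc r) / (fact (r-1) * fact (k-r-1)) else 0) * x^r)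
          = (\<Sum>r\<in>{0..K}. (if 1 \<le> r \<and> r < k then v (Suc r) / (fact (r-1) * fact (k-r-1)) else 0) * x^r)"
        by (rule sum.mono_neutral_right) (auto simp: Suc)
      also have "\<dots> = (\<Sum>r\<in>{0..K}. v (Suc r) * real r * x^r / (fact r * fact (K-r)))"
      proof (rule sum.cong)
        fix r assume r: "r \<in> {0..K}"
        show "(if 1 \<le> r \<and> r < k then v (Suc r) / (fact (r-1) * fact (k-r-1)) else 0) * x^r = v (Suc r) * real r * x^r / (fact r * fact (K-r))"
        proof (cases "r = 0")
          case False
          have "fact r = (real r * fact (r-1) :: real)"
            using False by (rule fact_reduce_n)
          moreover have "k - r - 1 = K - r" using Suc by simp
          ultimately show ?thesis using False r Suc by (simp add: field_simps)
        qed simp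
      qed simp
      finally show ?thesis by simp
    qed
    finally show ?thesis by (simp add: atLeast0AtMost)
  qed
  show ?thesis unfolding e1 e2 e3 sum_subtractf[symmetric]
    by (rule sum.cong) (auto simp: diff_divide_distrib left_diff_distrib)
qed

lemma oneD:
  fixes v :: "nat \<Rightarrow> real"
  assumes "\<forall>x>0. (\<Sum>i\<in>{1..k}. v i * aa k i x) = 0" and "1 \<le> r" "r < k"
  shows "v r = v (Suc r)"
proof -
  let ?c = "\<lambda>r. (if 1 \<le> r \<and> r < k then (v r - v (Suc r)) / (fact (r-1) * fact (k-r-1)) else 0)"
  have "\<forall>x>0. (\<Sum>r\<le>k. ?c r * x^r) = 0" using assms(1) expand[of v k] by simp
  then have "\<forall>i\<le>k. ?c i = 0" by (rule poly0)
  moreover have "r \<le> k" using assms(3) by simp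
  ultimately have "?c r = 0" by blast
  then have "(v r - v (Suc r)) / (fact (r-1) * fact (k-r-1)) = 0" using assms by simp
  then show ?thesis by simp
qed

lemma term_aux:
  fixes x a b P Q F :: real
  assumes "x > 0" "P > 0" "Q > 0" "F \<noteq> 0"
  shows "(a / (1/(1+x)) - b / (x/(1+x))) * (x^(m-1) / P * (1 / Q)) / F
     = (1+x) / (x * (P * Q)) * ((a * x - b) * x^(m-1) / F)"
proof -
  have "a / (1/(1+x)) - b / (x/(1+x)) = (1+x) * (a*x - b) / x" using assms by (simp add: field_simps)
  then show ?thesis using assms by (simp add: divide_inverse mult_ac)
qed

lemma term_eq:
  fixes x :: real
  assumes "x > 0" "1 \<le> m" "m \<le> k"
  shows "(real (k-m) / (1 - x/(1+x)) - real (m-1) / (x/(1+x))) * ((x/(1+x))^(m-1) * (1 - x/(1+x))^(k-m))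
        / (fact (m-1) * fact (k-m)) = (1+x) / (x * (1+x)^(k-1)) * aa k m x"
proof -
  have o: "1 - x/(1+x) = 1/(1+x)" using assms by (simp add: field_simps)
  have p: "(1+x)^(k-1) = (1+x)^(m-1) * (1+x)^(k-m)"
    using assms by (simp add: power_add[symmetric])
  show ?thesis unfolding o p aa_def power_divide power_one
    by (rule term_aux) (use assms in auto)
qed

lemma split_aux:
  fixes A B P1 P2 Q1 Q2 f1 f2 g1 g2 :: real
  shows "A * B * (P1 * P2 * Q1 * Q2) / (f1 * f2 * g1 * g2) = (A * (P1 * P2) / (f1 * f2)) * (B * (Q1 * Q2) / (g1 * g2))"
  by (simp add: divide_inverse mult_ac)

lemma rowsum:
  assumes "p permutes {1..k}" "i \<in> {1..k}"
  shows "(\<Sum>j\<in>{1..k}. perm_matrix p i j) = 1"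
proof -
  have "p i \<in> {1..k}" using permutes_in_image[OF assms(1)] assms(2) by simp
  then show ?thesis unfolding perm_matrix_def
    using sum.delta'[of "{1..k}" "p i" "\<lambda>_. (1::real)"] by simp
qed

lemma colsum:
  assumes "p permutes {1..k}" "j \<in> {1..k}"
  shows "(\<Sum>i\<in>{1..k}. perm_matrix p i j) = 1"
proof -
  have "(\<Sum>i\<in>{1..k}. perm_matrix p i j) = (\<Sum>i\<in>{1..k}. (\<lambda>i'. if i' = j then 1 else 0) (p i))"
    unfolding perm_matrix_def by simp
  also have "\<dots> = (\<Sum>i'\<in>{1..k}. (if i' = j then 1 else 0))"
    using sum.permute[OF assms(1), of "\<lambda>i'. if i' = j then (1::real) else 0"] by (simp add: comp_def)
  also have "\<dots> = 1" using assms(2) by (simp add: sum.delta')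
  finally show ?thesis .
qed

theorem lemma10:
  fixes k n :: nat and t :: "nat \<Rightarrow> real" and \<pi> :: "nat \<Rightarrow> nat \<Rightarrow> nat"
  assumes perms: "\<forall>l\<in>{1..n}. kperm k (\<pi> l)"
    and zero: "\<forall>\<alpha> \<beta>. 0 < \<alpha> \<and> \<alpha> < 1 \<and> 0 < \<beta> \<and> \<beta> < 1 \<longrightarrow>
                 (\<Sum>l\<in>{1..n}. t l * grad_poly k (\<pi> l) \<alpha> \<beta>) = 0"
  shows "\<exists>c. \<forall>i\<in>{1..k}. \<forall>j\<in>{1..k}. cover_matrix n t \<pi> i j = c"
proof -
  define C where "C = cover_matrix n t \<pi>"
  have pmt: "\<pi> l permutes {1..k}" if "l \<in> {1..n}" for l using perms that unfolding kperm_def by blast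
  have pm: "\<pi> l m \<in> {1..k}" if "l \<in> {1..n}" "m \<in> {1..k}" for l m
    using permutes_in_image[OF pmt[OF that(1)]] that(2) by simp
  define K where "K x = (1+x)/(x*(1+x)^(k-1))" for x :: real
  have gp: "grad_poly k p (x/(1+x)) (y/(1+y)) = fact k * K x * K y * (\<Sum>m\<in>{1..k}. aa k m x * aa k (p m) y)"
     if xy: "x>0" "y>0" and pr: "\<forall>m\<in>{1..k}. p m \<in> {1..k}" for p x y
  proof -
    have "grad_poly k p (x/(1+x)) (y/(1+y)) = fact k * (\<Sum>m\<in>{1..k}. (K x * aa k m x) * (K y * aa k (p m) y))"
      unfolding grad_poly_def
    proof (rule arg_cong[where f="\<lambda>s. fact k * s"], rule sum.cong[OF refl])
      fix m assume m: "m \<in> {1..k}"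
      then have m1: "1 \<le> m" "m \<le> k" by auto
      have m2: "1 \<le> p m" "p m \<le> k" using pr m by auto
      show "(real (k - m) / (1 - x / (1 + x)) - real (m - 1) / (x / (1 + x))) *
         (real (k - p m) / (1 - y / (1 + y)) - real (p m - 1) / (y / (1 + y))) *
         ((x / (1 + x)) ^ (m - 1) * (1 - x / (1 + x)) ^ (k - m) * (y / (1 + y)) ^ (p m - 1) *
          (1 - y / (1 + y)) ^ (k - p m)) /
         (fact (m - 1) * fact (k - m) * fact (p m - 1) * fact (k - p m)) =
         K x * aa k m x * (K y * aa k (p m) y)"
        unfolding split_aux term_eq[OF xy(1) m1] term_eq[OF xy(2) m2] K_def ..
    qed
    also have "\<dots> = fact k * K x * K y * (\<Sum>m\<in>{1..k}. aa k m x * aa k (p m) y)"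
      by (simp add: sum_distrib_left mult_ac)
    finally show ?thesis .
  qed
  have cm: "(\<Sum>m\<in>{1..k}. aa k m x * aa k (p m) y) = (\<Sum>i\<in>{1..k}. \<Sum>j\<in>{1..k}. perm_matrix p i j * (aa k i x * aa k j y))"
    if pr: "\<forall>m\<in>{1..k}. p m \<in> {1..k}" for p x y
  proof (rule sum.cong[OF refl])
    fix i assume "i \<in> {1..k}"
    then have "p i \<in> {1..k}" using pr by blast
    have "(\<Sum>j\<in>{1..k}. perm_matrix p i j * (aa k i x * aa k j y)) = (\<Sum>j\<in>{1..k}. if p i = j then aa k i x * aa k j y else 0)"
      by (rule sum.cong) (simp_all add: perm_matrix_def)
    also have "\<dots> = aa k i x * aa k (p i) y"
      using sum.delta'[of "{1..k}" "p i" "\<lambda>j. aa k i x * aa k j y"] \<open>p i \<in> {1..k}\<close> by simp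
    finally show "aa k i x * aa k (p i) y = (\<Sum>j\<in>{1..k}. perm_matrix p i j * (aa k i x * aa k j y))" by simp
  qed
  have main0: "(\<Sum>i\<in>{1..k}. \<Sum>j\<in>{1..k}. C i j * (aa k i x * aa k j y)) = 0" if xy: "x>0" "y>0" for x y
  proof -
    have "0 = (\<Sum>l\<in>{1..n}. t l * grad_poly k (\<pi> l) (x/(1+x)) (y/(1+y)))"
      using zero xy by (simp add: field_simps)
    also have "\<dots> = (\<Sum>l\<in>{1..n}. t l * (fact k * K x * K y * (\<Sum>i\<in>{1..k}. \<Sum>j\<in>{1..k}. perm_matrix (\<pi> l) i j * (aa k i x * aa k j y))))"
    proof (rule sum.cong[OF refl])
      fix l assume l: "l \<in> {1..n}"
      have pr: "\<forall>m\<in>{1..k}. \<pi> l m \<in> {1..k}" using pm[OF l] by blast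
      show "t l * grad_poly k (\<pi> l) (x/(1+x)) (y/(1+y)) = t l * (fact k * K x * K y * (\<Sum>i\<in>{1..k}. \<Sum>j\<in>{1..k}. perm_matrix (\<pi> l) i j * (aa k i x * aa k j y)))"
        unfolding gp[OF xy pr] cm[OF pr] ..
    qed
    also have "\<dots> = fact k * K x * K y * (\<Sum>l\<in>{1..n}. t l * (\<Sum>i\<in>{1..k}. \<Sum>j\<in>{1..k}. perm_matrix (\<pi> l) i j * (aa k i x * aa k j y)))"
      by (simp add: sum_distrib_left mult_ac)
    also have "(\<Sum>l\<in>{1..n}. t l * (\<Sum>i\<in>{1..k}. \<Sum>j\<in>{1..k}. perm_matrix (\<pi> l) i j * (aa k i x * aa k j y)))
       = (\<Sum>l\<in>{1..n}. \<Sum>i\<in>{1..k}. \<Sum>j\<in>{1..k}. t l * perm_matrix (\<pi> l) i j * (aa k i x * aa k j y))"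
      by (simp add: sum_distrib_left mult_ac)
    also have "\<dots> = (\<Sum>i\<in>{1..k}. \<Sum>l\<in>{1..n}. \<Sum>j\<in>{1..k}. t l * perm_matrix (\<pi> l) i j * (aa k i x * aa k j y))"
      by (rule sum.swap)
    also have "\<dots> = (\<Sum>i\<in>{1..k}. \<Sum>j\<in>{1..k}. \<Sum>l\<in>{1..n}. t l * perm_matrix (\<pi> l) i j * (aa k i x * aa k j y))"
      by (rule sum.cong[OF refl], rule sum.swap)
    also have "\<dots> = (\<Sum>i\<in>{1..k}. \<Sum>j\<in>{1..k}. C i j * (aa k i x * aa k j y))"
      unfolding C_def cover_matrix_def by (simp add: sum_distrib_right)
    finally have "fact k * K x * K y * (\<Sum>i\<in>{1..k}. \<Sum>j\<in>{1..k}. C i j * (aa k i x * aa k j y)) = 0" by simp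
    moreover have "K x \<noteq> 0" "K y \<noteq> 0" using xy unfolding K_def by auto
    ultimately show ?thesis by simp
  qed
  have step4: "C s r - C s (Suc r) = C (Suc s) r - C (Suc s) (Suc r)"
    if r: "1 \<le> r" "r < k" and s: "1 \<le> s" "s < k" for r s
  proof -
    have "(\<Sum>i\<in>{1..k}. C i r * aa k i x) = (\<Sum>i\<in>{1..k}. C i (Suc r) * aa k i x)" if x: "x > 0" for x
    proof -
      have "\<forall>y>0. (\<Sum>j\<in>{1..k}. (\<Sum>i\<in>{1..k}. C i j * aa k i x) * aa k j y) = 0"
      proof (intro allI impI)
        fix y :: real assume y: "y > 0"
        have "(\<Sum>j\<in>{1..k}. (\<Sum>i\<in>{1..k}. C i j * aa k i x) * aa k j y)
           = (\<Sum>j\<in>{1..k}. \<Sum>i\<in>{1..k}. C i j * (aa k i x * aa k j y))"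
          by (simp add: sum_distrib_right mult.assoc)
        also have "\<dots> = (\<Sum>i\<in>{1..k}. \<Sum>j\<in>{1..k}. C i j * (aa k i x * aa k j y))"
          by (rule sum.swap)
        also have "\<dots> = 0" using main0[OF x y] .
        finally show "(\<Sum>j\<in>{1..k}. (\<Sum>i\<in>{1..k}. C i j * aa k i x) * aa k j y) = 0" .
      qed
      from oneD[OF this r] show ?thesis .
    qed
    then have "\<forall>x>0. (\<Sum>i\<in>{1..k}. (C i r - C i (Suc r)) * aa k i x) = 0"
      by (simp add: left_diff_distrib sum_subtractf)
    from oneD[OF this s] show ?thesis .
  qed
  have Eind: "C i r - C i (Suc r) = C 1 r - C 1 (Suc r)" if r: "1 \<le> r" "r < k" and i: "1 \<le> i" "i \<le> k" for r i
    using i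
  proof (induction i rule: dec_induct)
    case base then show ?case by simp
  next
    case (step s)
    have "C s r - C s (Suc r) = C (Suc s) r - C (Suc s) (Suc r)" using step4[OF r, of s] step.hyps i(2) by simp
    moreover have "C s r - C s (Suc r) = C 1 r - C 1 (Suc r)" using step.IH step.hyps i(2) by simp
    ultimately show ?case by linarith
  qed
  have Q: "\<forall>i\<in>{1..k}. C i j = C i 1 + C 1 j - C 1 1" if j: "1 \<le> j" "j \<le> k" for j
    using j
  proof (induction j rule: dec_induct)
    case base then show ?case by simp
  next
    case (step j)
    show ?case
    proof
      fix i assume i: "i \<in> {1..k}"
      have jk: "j \<le> k" using step.hyps that(2) by simp
      from jk have "\<forall>i\<in>{1..k}. C i j = C i 1 + C 1 j - C 1 1" by (rule step.IH)
      then have ih: "C i j = C i 1 + C 1 j - C 1 1" using i by blast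
      have j1: "1 \<le> j" "j < k" using step.hyps that(2) by auto
      have i1: "1 \<le> i" "i \<le> k" using i by auto
      have "C i j - C i (Suc j) = C 1 j - C 1 (Suc j)" by (rule Eind[OF j1 i1])
      then show "C i (Suc j) = C i 1 + C 1 (Suc j) - C 1 1" using ih by linarith
    qed
  qed
  define T where "T = (\<Sum>l\<in>{1..n}. t l)"
  have rs: "(\<Sum>j\<in>{1..k}. C i j) = T" if "i \<in> {1..k}" for i
  proof -
    have "(\<Sum>j\<in>{1..k}. C i j) = (\<Sum>j\<in>{1..k}. \<Sum>l\<in>{1..n}. t l * perm_matrix (\<pi> l) i j)"
      unfolding C_def cover_matrix_def ..
    also have "\<dots> = (\<Sum>l\<in>{1..n}. \<Sum>j\<in>{1..k}. t l * perm_matrix (\<pi> l) i j)"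
      by (rule sum.swap)
    also have "\<dots> = (\<Sum>l\<in>{1..n}. t l * (\<Sum>j\<in>{1..k}. perm_matrix (\<pi> l) i j))"
      by (simp only: sum_distrib_left)
    finally have "(\<Sum>j\<in>{1..k}. C i j) = (\<Sum>l\<in>{1..n}. t l * (\<Sum>j\<in>{1..k}. perm_matrix (\<pi> l) i j))" .
    also have "\<dots> = T" unfolding T_def using rowsum[OF pmt that] by simp
    finally show ?thesis .
  qed
  have cs: "(\<Sum>i\<in>{1..k}. C i j) = T" if "j \<in> {1..k}" for j
  proof -
    have "(\<Sum>i\<in>{1..k}. C i j) = (\<Sum>i\<in>{1..k}. \<Sum>l\<in>{1..n}. t l * perm_matrix (\<pi> l) i j)"
      unfolding C_def cover_matrix_def ..
    also have "\<dots> = (\<Sum>l\<in>{1..n}. \<Sum>i\<in>{1..k}. t l * perm_matrix (\<pi> l) i j)"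
      by (rule sum.swap)
    also have "\<dots> = (\<Sum>l\<in>{1..n}. t l * (\<Sum>i\<in>{1..k}. perm_matrix (\<pi> l) i j))"
      by (simp only: sum_distrib_left)
    finally have "(\<Sum>i\<in>{1..k}. C i j) = (\<Sum>l\<in>{1..n}. t l * (\<Sum>i\<in>{1..k}. perm_matrix (\<pi> l) i j))" .
    also have "\<dots> = T" unfolding T_def using colsum[OF pmt that] by simp
    finally show ?thesis .
  qed
  have Qi: "C i j = C i 1 + C 1 j - C 1 1" if "i \<in> {1..k}" "j \<in> {1..k}" for i j
  proof -
    have j1: "1 \<le> j" "j \<le> k" using that(2) by auto
    show ?thesis using Q[OF j1] that(1) by blast
  qed
  have k1: "1 \<in> {1..k}" if "i \<in> {1..k}" for i using that by auto
  have col1: "C i 1 = C 1 1" if i: "i \<in> {1..k}" for i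
  proof -
    have "T = (\<Sum>j\<in>{1..k}. C i j)" using rs[OF i] by simp
    also have "\<dots> = (\<Sum>j\<in>{1..k}. C i 1 + C 1 j - C 1 1)"
      by (rule sum.cong[OF refl], rule Qi[OF i])
    also have "\<dots> = real k * (C i 1 - C 1 1) + (\<Sum>j\<in>{1..k}. C 1 j)"
      by (simp add: sum.distrib sum_subtractf algebra_simps)
    also have "(\<Sum>j\<in>{1..k}. C 1 j) = T" by (rule rs[OF k1[OF i]])
    finally have "real k * (C i 1 - C 1 1) = 0" by simp
    moreover have "real k \<noteq> 0" using i by auto
    ultimately show ?thesis by simp
  qed
  have row1: "C 1 j = C 1 1" if j: "j \<in> {1..k}" for j
  proof -
    have "T = (\<Sum>i\<in>{1..k}. C i j)" using cs[OF j] by simp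
    also have "\<dots> = (\<Sum>i\<in>{1..k}. C i 1 + C 1 j - C 1 1)"
      by (rule sum.cong[OF refl], rule Qi[OF _ j])
    also have "\<dots> = real k * (C 1 j - C 1 1) + (\<Sum>i\<in>{1..k}. C i 1)"
      by (simp add: sum.distrib sum_subtractf algebra_simps)
    also have "(\<Sum>i\<in>{1..k}. C i 1) = T" by (rule cs[OF k1[OF j]])
    finally have "real k * (C 1 j - C 1 1) = 0" by simp
    moreover have "real k \<noteq> 0" using j by auto
    ultimately show ?thesis by simp
  qed
  have "\<forall>i\<in>{1..k}. \<forall>j\<in>{1..k}. C i j = C 1 1"
  proof (intro ballI)
    fix i j assume i: "i \<in> {1..k}" and j: "j \<in> {1..k}"
    have "C i j = C i 1 + C 1 j - C 1 1" by (rule Qi[OF i j])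
    then show "C i j = C 1 1" using col1[OF i] row1[OF j] by linarith
  qed
  then show ?thesis unfolding C_def by blast
qed

end
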